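(* Let $\Omega$ be a transitive state space with finitely many extreme points, and suppose its positive cone $V_+$ is self-dual with respect to some inner product on $V$. Then there exists a linear bijection $\Xi:V\to V$ such that $\Omega':=\Xi\Omega$ is transitive and the positive cone $V'_+$ generated by $\Omega'$ is self-dual with respect to $\langle\cdot,\cdot\rangle_{GL(\Omega')}$, i.e. $V'_+=\{y\in V:\langle x,y\rangle_{GL(\Omega')}\ge0\ \forall x\in V'_+\}$.
   Context: $V=\mathbb R^{N+1}$ with Euclidean inner product $(\cdot,\cdot)_E$. A state space $\Omega\subset V$ is a compact convex set with $\mathrm{span}(\Omega)=V$ and $0\notin\mathrm{aff}(\Omega)$; $V_+=\{\lambda\omega:\lambda\ge0,\omega\in\Omega\}$. $GL(\Omega)$ is the group of linear bijections $T:V\to V$ with $T(\Omega)=\Omega$, $\mu$ its normalized Haar measure, $\langle x,y\rangle_{GL(\Omega)}=\int(Tx,Ty)_E\,d\mu(T)$. $\Omega$ is transitive if $GL(\Omega)$ acts transitively on its extreme points. For an inner product $(\cdot,\cdot)$ on $V$, the internal dual cone is $V^{*int}_{+(\cdot,\cdot)}=\{y:(x,y)\ge0\ \forall x\in V_+\}$, and $V_+$ is self-dual with respect to $(\cdot,\cdot)$ if $V_+=V^{*int}_{+(\cdot,\cdot)}$. *)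

theory Defs
  imports "HOL-Analysis.Analysis"
begin

text \<open>V is modelled by an arbitrary Euclidean space type 'a (dimension N+1 = DIM('a)),
  with Euclidean inner product the library inner product.\<close>

definition state_space :: "'a::euclidean_space set \<Rightarrow> bool" where
  "state_space \<Omega> \<longleftrightarrow> compact \<Omega> \<and> convex \<Omega> \<and> span \<Omega> = UNIV \<and> 0 \<notin> affine hull \<Omega>"

definition pos_cone :: "'a::euclidean_space set \<Rightarrow> 'a set" where
  "pos_cone \<Omega> = {c *\<^sub>R w | c w. c \<ge> 0 \<and> w \<in> \<Omega>}"

definition GLs :: "'a::euclidean_space set \<Rightarrow> ('a \<Rightarrow> 'a) set" where
  "GLs \<Omega> = {T. linear T \<and> bij T \<and> T ` \<Omega> = \<Omega>}"

definition extreme_points :: "'a::euclidean_space set \<Rightarrow> 'a set" where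
  "extreme_points \<Omega> = {x. x extreme_point_of \<Omega>}"

definition transitive_ss :: "'a::euclidean_space set \<Rightarrow> bool" where
  "transitive_ss \<Omega> \<longleftrightarrow>
     (\<forall>x\<in>extreme_points \<Omega>. \<forall>y\<in>extreme_points \<Omega>. \<exists>T\<in>GLs \<Omega>. T x = y)"

text \<open>Averaged inner product w.r.t. the normalized Haar measure of GL(Omega).
  When GL(Omega) is finite (as is the case whenever Omega has finitely many extreme
  points spanning V) the normalized Haar measure is the uniform counting measure.\<close>
definition gl_inner :: "'a::euclidean_space set \<Rightarrow> 'a \<Rightarrow> 'a \<Rightarrow> real" where
  "gl_inner \<Omega> x y = (\<Sum>T\<in>GLs \<Omega>. inner (T x) (T y)) / real (card (GLs \<Omega>))"

definition is_inner_product :: "('a::euclidean_space \<Rightarrow> 'a \<Rightarrow> real) \<Rightarrow> bool" where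
  "is_inner_product ip \<longleftrightarrow>
     (\<forall>y. linear (\<lambda>x. ip x y)) \<and> (\<forall>x y. ip x y = ip y x) \<and> (\<forall>x. x \<noteq> 0 \<longrightarrow> ip x x > 0)"

definition internal_dual_cone :: "('a::euclidean_space \<Rightarrow> 'a \<Rightarrow> real) \<Rightarrow> 'a set \<Rightarrow> 'a set" where
  "internal_dual_cone ip C = {y. \<forall>x\<in>C. ip x y \<ge> 0}"

definition self_dual :: "'a::euclidean_space set \<Rightarrow> ('a \<Rightarrow> 'a \<Rightarrow> real) \<Rightarrow> bool" where
  "self_dual \<Omega> ip \<longleftrightarrow> pos_cone \<Omega> = internal_dual_cone ip (pos_cone \<Omega>)"

end

theory Submission
  imports Defs
begin

lemma ss_nonempty: assumes "state_space \<Omega>" shows "\<Omega> \<noteq> {}"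
proof
  assume "\<Omega> = {}"
  then have "span \<Omega> = {0}" by simp
  with assms have "(UNIV::'a set) = {0}" by (simp add: state_space_def)
  moreover obtain b::'a where "b \<in> Basis" using nonempty_Basis by blast
  ultimately show False using nonzero_Basis by blast
qed

lemma ell_exists:
  assumes "state_space \<Omega>"
  shows "\<exists>a. \<forall>x\<in>\<Omega>. inner a x = 1"
proof -
  have cv: "convex (affine hull \<Omega>)" by (simp add: affine_imp_convex)
  have n0: "0 \<notin> affine hull \<Omega>" using assms by (simp add: state_space_def)
  obtain a b where ab: "inner a 0 < b" "\<forall>x\<in>affine hull \<Omega>. inner a x > b"
    using separating_hyperplane_closed_point[OF cv closed_affine_hull n0] by blast
  have const: "inner a x = inner a y" if x: "x \<in> affine hull \<Omega>" and y: "y \<in> affine hull \<Omega>" for x y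
  proof (rule ccontr)
    assume neq: "inner a x \<noteq> inner a y"
    define d where "d = inner a y - inner a x"
    have dnz: "d \<noteq> 0" using neq by (simp add: d_def)
    define t where "t = (b - inner a x - 1) / d"
    have "(1 - t) *\<^sub>R x + t *\<^sub>R y \<in> affine hull \<Omega>"
      using affine_affine_hull[of \<Omega>] x y unfolding affine_def by simp
    then have "inner a ((1 - t) *\<^sub>R x + t *\<^sub>R y) > b" using ab by blast
    moreover have "inner a ((1 - t) *\<^sub>R x + t *\<^sub>R y) = inner a x + t * d"
      by (simp add: inner_add_right d_def algebra_simps)
    moreover have "t * d = b - inner a x - 1" using dnz by (simp add: t_def)
    ultimately show False by simp
  qed
  obtain x0 where x0: "x0 \<in> \<Omega>" using ss_nonempty[OF assms] by blast
  have x0h: "x0 \<in> affine hull \<Omega>" using x0 by (rule hull_inc)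
  define c where "c = inner a x0"
  have "inner a x0 > b" using ab x0h by blast
  moreover have "b > 0" using ab by simp
  ultimately have cpos: "c > 0" by (simp add: c_def)
  show ?thesis
  proof (intro exI ballI)
    fix x assume "x \<in> \<Omega>"
    then have "x \<in> affine hull \<Omega>" by (rule hull_inc)
    then have "inner a x = c" using const[OF _ x0h] c_def by simp
    then show "inner (a /\<^sub>R c) x = 1" using cpos by simp
  qed
qed

lemma cone_scale:
  assumes "x \<in> pos_cone \<Omega>" "c \<ge> 0" shows "c *\<^sub>R x \<in> pos_cone \<Omega>"
proof -
  obtain d w where dw: "x = d *\<^sub>R w" "d \<ge> 0" "w \<in> \<Omega>" using assms(1) unfolding pos_cone_def by blast
  then show ?thesis using assms(2) unfolding pos_cone_def by (auto intro!: exI[of _ "c*d"] exI[of _ w])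
qed

lemma omega_in_cone: "\<Omega> \<subseteq> pos_cone \<Omega>"
  unfolding pos_cone_def by (auto intro!: exI[of _ 1])

lemma cone_rep:
  assumes "state_space \<Omega>" "finite (extreme_points \<Omega>)" "x \<in> pos_cone \<Omega>"
  shows "\<exists>f. (\<forall>e\<in>extreme_points \<Omega>. f e \<ge> 0) \<and> x = (\<Sum>e\<in>extreme_points \<Omega>. f e *\<^sub>R e)"
proof -
  obtain c w where cw: "x = c *\<^sub>R w" "c \<ge> 0" "w \<in> \<Omega>" using assms(3) unfolding pos_cone_def by blast
  have "\<Omega> = convex hull (extreme_points \<Omega>)"
    using Krein_Milman_Minkowski assms(1) unfolding state_space_def extreme_points_def by blast
  then obtain u where u: "\<forall>e\<in>extreme_points \<Omega>. 0 \<le> u e" "(\<Sum>e\<in>extreme_points \<Omega>. u e *\<^sub>R e) = w"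
    using cw(3) convex_hull_finite[OF assms(2)] by blast
  show ?thesis
    by (rule exI[of _ "\<lambda>e. c * u e"]) (use u cw in \<open>auto simp: scaleR_sum_right\<close>)
qed

lemma ext_in: "extreme_points \<Omega> \<subseteq> \<Omega>"
  unfolding extreme_points_def extreme_point_of_def by blast

lemma red:
  assumes "state_space \<Omega>" "finite (extreme_points \<Omega>)"
  shows "(\<forall>x\<in>pos_cone \<Omega>. inner x w \<ge> 0) \<longleftrightarrow> (\<forall>e\<in>extreme_points \<Omega>. inner e w \<ge> 0)"
proof
  assume "\<forall>x\<in>pos_cone \<Omega>. inner x w \<ge> 0"
  then show "\<forall>e\<in>extreme_points \<Omega>. inner e w \<ge> 0" using ext_in omega_in_cone by blast
next
  assume h: "\<forall>e\<in>extreme_points \<Omega>. inner e w \<ge> 0"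
  show "\<forall>x\<in>pos_cone \<Omega>. inner x w \<ge> 0"
  proof
    fix x assume "x \<in> pos_cone \<Omega>"
    then obtain f where f: "\<forall>e\<in>extreme_points \<Omega>. f e \<ge> 0" "x = (\<Sum>e\<in>extreme_points \<Omega>. f e *\<^sub>R e)"
      using cone_rep assms by blast
    show "inner x w \<ge> 0" using f h by (auto simp: inner_sum_left intro!: sum_nonneg)
  qed
qed

lemma extreme_decomp:
  assumes ss: "state_space \<Omega>" and e: "e \<in> extreme_points \<Omega>"
    and u: "u \<in> pos_cone \<Omega>" and v: "v \<in> pos_cone \<Omega>" and euv: "e = u + v"
  shows "\<exists>\<alpha>. u = \<alpha> *\<^sub>R e"
proof -
  obtain a where a: "\<forall>x\<in>\<Omega>. inner a x = 1" using ell_exists[OF ss] by blast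
  obtain \<alpha> w1 where u': "u = \<alpha> *\<^sub>R w1" "\<alpha> \<ge> 0" "w1 \<in> \<Omega>" using u unfolding pos_cone_def by blast
  obtain \<beta> w2 where v': "v = \<beta> *\<^sub>R w2" "\<beta> \<ge> 0" "w2 \<in> \<Omega>" using v unfolding pos_cone_def by blast
  have eO: "e \<in> \<Omega>" using e ext_in by blast
  have "inner a e = \<alpha> + \<beta>" using euv u' v' a by (simp add: inner_add_right)
  then have sum1: "\<alpha> + \<beta> = 1" using a eO by simp
  show ?thesis
  proof (cases "\<alpha> = 0")
    case True then show ?thesis using u' by (auto intro: exI[of _ 0])
  next
    case a0: False
    show ?thesis
    proof (cases "\<beta> = 0")
      case True
      then have "u = e" using euv v' by simp
      then show ?thesis by (auto intro: exI[of _ 1])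
    next
      case False
      have "w1 = w2"
      proof (rule ccontr)
        assume "w1 \<noteq> w2"
        moreover have "\<alpha> = 1 - \<beta>" using sum1 by simp
        then have "e = (1 - \<beta>) *\<^sub>R w1 + \<beta> *\<^sub>R w2" using euv u' v' by simp
        moreover have "0 < \<beta>" "\<beta> < 1" using False a0 v' u' sum1 by auto
        ultimately have "e \<in> open_segment w1 w2" by (auto simp: in_segment)
        then show False using e u'(3) v'(3) unfolding extreme_points_def extreme_point_of_def by blast
      qed
      then have "e = (\<alpha> + \<beta>) *\<^sub>R w1" using euv u' v' by (simp add: scaleR_add_left)
      then have "e = w1" using sum1 by simp
      then show ?thesis using u' by blast
    qed
  qed
qed

lemma ray:
  assumes ss: "state_space \<Omega>" and S: "linear S" "bij S"
    and hinto: "S ` pos_cone \<Omega> \<subseteq> pos_cone \<Omega>" and hback: "\<And>y. S y \<in> pos_cone \<Omega> \<Longrightarrow> y \<in> pos_cone \<Omega>"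
    and e: "e \<in> extreme_points \<Omega>"
  shows "\<exists>c>0. \<exists>e'\<in>extreme_points \<Omega>. S e = c *\<^sub>R e'"
proof -
  obtain a where a: "\<forall>x\<in>\<Omega>. inner a x = 1" using ell_exists[OF ss] by blast
  have eO: "e \<in> \<Omega>" using e ext_in by blast
  have "e \<noteq> 0" using a eO by fastforce
  have injS: "inj S" using S(2) by (rule bij_is_inj)
  have Se0: "S e \<noteq> 0"
  proof
    assume "S e = 0"
    then have "S e = S 0" using linear_0[OF S(1)] by simp
    then have "e = 0" using injS by (simp add: inj_eq)
    then show False using \<open>e \<noteq> 0\<close> by simp
  qed
  have "S e \<in> pos_cone \<Omega>" using hinto eO omega_in_cone by blast
  then obtain c w where cw: "S e = c *\<^sub>R w" "c \<ge> 0" "w \<in> \<Omega>" unfolding pos_cone_def by blast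
  have cpos: "c > 0" using cw Se0 by (cases "c = 0") auto
  have "w extreme_point_of \<Omega>"
    unfolding extreme_point_of_def
  proof (intro conjI ballI)
    show "w \<in> \<Omega>" by fact
    fix p q assume p: "p \<in> \<Omega>" and q: "q \<in> \<Omega>"
    show "w \<notin> open_segment p q"
    proof
      assume "w \<in> open_segment p q"
      then obtain t where pq: "p \<noteq> q" "0 < t" "t < 1" "w = (1 - t) *\<^sub>R p + t *\<^sub>R q"
        by (auto simp: in_segment)
      obtain p' where p': "S p' = p" using S(2) by (metis bij_pointE)
      obtain q' where q': "S q' = q" using S(2) by (metis bij_pointE)
      have p'K: "p' \<in> pos_cone \<Omega>" using hback p' p omega_in_cone by blast
      have q'K: "q' \<in> pos_cone \<Omega>" using hback q' q omega_in_cone by blast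
      have "S ((c*(1-t)) *\<^sub>R p' + (c*t) *\<^sub>R q') = (c*(1-t)) *\<^sub>R p + (c*t) *\<^sub>R q"
        using p' q' by (simp add: linear_add[OF S(1)] linear_scale[OF S(1)])
      also have "\<dots> = S e" using cw pq by (simp add: algebra_simps)
      finally have eq: "e = (c*(1-t)) *\<^sub>R p' + (c*t) *\<^sub>R q'" using injS by (simp add: inj_eq)
      have u1: "(c*(1-t)) *\<^sub>R p' \<in> pos_cone \<Omega>" by (rule cone_scale[OF p'K]) (use cpos pq in simp)
      have u2: "(c*t) *\<^sub>R q' \<in> pos_cone \<Omega>" by (rule cone_scale[OF q'K]) (use cpos pq in simp)
      obtain \<alpha> where al: "(c*(1-t)) *\<^sub>R p' = \<alpha> *\<^sub>R e"
        using extreme_decomp[OF ss e u1 u2 eq] by blast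
      have eq2: "e = (c*t) *\<^sub>R q' + (c*(1-t)) *\<^sub>R p'" using eq by (simp add: add.commute)
      obtain \<beta> where be: "(c*t) *\<^sub>R q' = \<beta> *\<^sub>R e"
        using extreme_decomp[OF ss e u2 u1 eq2] by blast
      have "S ((c*(1-t)) *\<^sub>R p') = S (\<alpha> *\<^sub>R e)" using al by simp
      then have P1: "(c*(1-t)) *\<^sub>R p = (\<alpha> * c) *\<^sub>R w" using p' cw by (simp add: linear_scale[OF S(1)])
      have "S ((c*t) *\<^sub>R q') = S (\<beta> *\<^sub>R e)" using be by simp
      then have Q1: "(c*t) *\<^sub>R q = (\<beta> * c) *\<^sub>R w" using q' cw by (simp add: linear_scale[OF S(1)])
      have "inner a ((c*(1-t)) *\<^sub>R p) = inner a ((\<alpha> * c) *\<^sub>R w)" using P1 by simp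
      then have k1: "\<alpha> * c = c*(1-t)" using a p cw(3) by (auto simp: mult.commute)
      have "(c*(1-t)) *\<^sub>R p = (c*(1-t)) *\<^sub>R w" by (metis P1 k1)
      moreover have "c*(1-t) \<noteq> 0" using cpos pq by simp
      ultimately have pw: "p = w" by simp
      have "inner a ((c*t) *\<^sub>R q) = inner a ((\<beta> * c) *\<^sub>R w)" using Q1 by simp
      then have k2: "\<beta> * c = c*t" using a q cw(3) by (auto simp: mult.commute)
      have "(c*t) *\<^sub>R q = (c*t) *\<^sub>R w" by (metis Q1 k2)
      moreover have "c*t \<noteq> 0" using cpos pq by simp
      ultimately have qw: "q = w" by simp
      show False using pw qw pq(1) by simp
    qed
  qed
  then show ?thesis using cw cpos unfolding extreme_points_def by blast
qed

lemma ext_image: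
  assumes "linear f" "inj f"
  shows "extreme_points (f ` S) = f ` extreme_points S"
proof -
  have "f x extreme_point_of f ` S \<longleftrightarrow> x extreme_point_of S" for x
    using face_of_linear_image[OF assms, of "{x}" S] by (simp add: face_of_singleton[symmetric])
  moreover have "y extreme_point_of f ` S \<Longrightarrow> y \<in> f ` S" for y
    by (simp add: extreme_point_of_def)
  ultimately show ?thesis unfolding extreme_points_def
  proof -
    assume h1: "\<And>x. (f x extreme_point_of f ` S) = (x extreme_point_of S)"
      and h2: "\<And>y. y extreme_point_of f ` S \<Longrightarrow> y \<in> f ` S"
    show "{x. x extreme_point_of f ` S} = f ` {x. x extreme_point_of S}"
    proof (intro equalityI subsetI)
      fix y assume "y \<in> {x. x extreme_point_of f ` S}"
      then have y: "y extreme_point_of f ` S" by simp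
      then obtain x where "y = f x" using h2 by blast
      then show "y \<in> f ` {x. x extreme_point_of S}" using h1 y by blast
    next
      fix y assume "y \<in> f ` {x. x extreme_point_of S}"
      then obtain x where "y = f x" "x extreme_point_of S" by blast
      then show "y \<in> {x. x extreme_point_of f ` S}" using h1 by simp
    qed
  qed
qed

lemma pos_cone_image:
  assumes "linear f"
  shows "pos_cone (f ` \<Omega>) = f ` pos_cone \<Omega>"
proof (intro equalityI subsetI)
  fix y assume "y \<in> pos_cone (f ` \<Omega>)"
  then obtain c w0 where y: "y = c *\<^sub>R f w0" "c \<ge> 0" "w0 \<in> \<Omega>" unfolding pos_cone_def by blast
  then have "y = f (c *\<^sub>R w0)" using linear_scale[OF assms] by simp
  moreover have "c *\<^sub>R w0 \<in> pos_cone \<Omega>" using y unfolding pos_cone_def by blast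
  ultimately show "y \<in> f ` pos_cone \<Omega>" by blast
next
  fix y assume "y \<in> f ` pos_cone \<Omega>"
  then obtain c w0 where y: "y = f (c *\<^sub>R w0)" "c \<ge> 0" "w0 \<in> \<Omega>" unfolding pos_cone_def by blast
  then have "y = c *\<^sub>R f w0" using linear_scale[OF assms] by simp
  then show "y \<in> pos_cone (f ` \<Omega>)" using y unfolding pos_cone_def by blast
qed

lemma ss_image:
  fixes f :: "'a::euclidean_space \<Rightarrow> 'a"
  assumes ss: "state_space \<Omega>" and f: "linear f" "bij f"
  shows "state_space (f ` \<Omega>)"
proof -
  have bl: "bounded_linear f" using f(1) linear_conv_bounded_linear by blast
  have injf: "inj f" using f(2) bij_is_inj by blast
  have "compact (f ` \<Omega>)" using ss compact_continuous_image[OF linear_continuous_on[OF bl]]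
    by (simp add: state_space_def)
  moreover have "convex (f ` \<Omega>)" using ss convex_linear_image[OF f(1)] by (simp add: state_space_def)
  moreover have "span (f ` \<Omega>) = UNIV"
    using ss f real_vector.linear_span_image[OF f(1), of \<Omega>] by (simp add: state_space_def bij_is_surj)
  moreover have "0 \<notin> affine hull (f ` \<Omega>)"
  proof
    assume "0 \<in> affine hull (f ` \<Omega>)"
    then have "0 \<in> f ` (affine hull \<Omega>)" using affine_hull_linear_image[OF bl] by simp
    then obtain z where "z \<in> affine hull \<Omega>" "f z = 0" by (metis imageE)
    then have "z = 0" using linear_0[OF f(1)] injf by (metis inj_eq)
    then show False using \<open>z \<in> affine hull \<Omega>\<close> ss by (simp add: state_space_def)
  qed
  ultimately show ?thesis by (simp add: state_space_def)
qed

lemma GLs_conj: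
  fixes f :: "'a::euclidean_space \<Rightarrow> 'a"
  assumes f: "linear f" "bij f" and T: "T \<in> GLs \<Omega>"
  shows "f \<circ> T \<circ> inv f \<in> GLs (f ` \<Omega>)"
proof -
  have injf: "inj f" using f(2) bij_is_inj by blast
  have li: "linear (inv f)" using eucl.inj_linear_imp_inv_linear[OF f(1) injf] .
  have T': "linear T" "bij T" "T ` \<Omega> = \<Omega>" using T by (auto simp: GLs_def)
  have "linear (f \<circ> T \<circ> inv f)" using li T'(1) f(1) by (simp add: linear_compose)
  moreover have "bij (f \<circ> T \<circ> inv f)" using T'(2) f(2) by (simp add: bij_comp bij_imp_bij_inv)
  moreover have "(f \<circ> T \<circ> inv f) ` (f ` \<Omega>) = f ` \<Omega>"
  proof -
    have "(f \<circ> T \<circ> inv f) ` (f ` \<Omega>) = f ` (T ` \<Omega>)"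
      using injf by (simp add: image_image)
    then show ?thesis using T'(3) by simp
  qed
  ultimately show ?thesis by (simp add: GLs_def)
qed

lemma transitive_image:
  fixes f :: "'a::euclidean_space \<Rightarrow> 'a"
  assumes f: "linear f" "bij f" and tr: "transitive_ss \<Omega>"
  shows "transitive_ss (f ` \<Omega>)"
  unfolding transitive_ss_def
proof (intro ballI)
  have injf: "inj f" using f(2) bij_is_inj by blast
  fix x y assume "x \<in> extreme_points (f ` \<Omega>)" "y \<in> extreme_points (f ` \<Omega>)"
  then obtain x0 y0 where xy: "x = f x0" "y = f y0" "x0 \<in> extreme_points \<Omega>" "y0 \<in> extreme_points \<Omega>"
    using ext_image[OF f(1) injf] by auto
  then obtain T where T: "T \<in> GLs \<Omega>" "T x0 = y0" using tr unfolding transitive_ss_def by blast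
  have "(f \<circ> T \<circ> inv f) x = y" using xy T injf by simp
  then show "\<exists>T\<in>GLs (f ` \<Omega>). T x = y" using GLs_conj[OF f T(1)] by blast
qed

lemma span_ext:
  assumes ss: "state_space \<Omega>"
  shows "span (extreme_points \<Omega>) = UNIV"
proof -
  have "\<Omega> = convex hull (extreme_points \<Omega>)"
    using Krein_Milman_Minkowski ss unfolding state_space_def extreme_points_def by blast
  then have "\<Omega> \<subseteq> span (extreme_points \<Omega>)" using convex_hull_subset_span by blast
  then have "span \<Omega> \<subseteq> span (extreme_points \<Omega>)" by (simp add: span_minimal)
  then show ?thesis using ss by (auto simp: state_space_def)
qed

lemma GLs_ext:
  assumes "T \<in> GLs \<Omega>" shows "T ` extreme_points \<Omega> = extreme_points \<Omega>"
  using assms ext_image[of T \<Omega>] by (auto simp: GLs_def bij_is_inj)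

lemma GLs_finite:
  assumes ss: "state_space \<Omega>" and fin: "finite (extreme_points \<Omega>)"
  shows "finite (GLs \<Omega>)"
proof -
  let ?E = "extreme_points \<Omega>"
  let ?\<phi> = "\<lambda>T. restrict T ?E"
  have "?\<phi> ` GLs \<Omega> \<subseteq> ?E \<rightarrow>\<^sub>E ?E" using GLs_ext by fastforce
  then have "finite (?\<phi> ` GLs \<Omega>)" using finite_PiE[OF fin, of "\<lambda>_. ?E"] fin finite_subset by blast
  moreover have "inj_on ?\<phi> (GLs \<Omega>)"
  proof (rule inj_onI)
    fix T1 T2 assume T: "T1 \<in> GLs \<Omega>" "T2 \<in> GLs \<Omega>" "?\<phi> T1 = ?\<phi> T2"
    have "T1 x = T2 x" for x
    proof (rule real_vector.linear_eq_on_span[of T1 T2 ?E])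
      show "linear T1" "linear T2" using T by (auto simp: GLs_def)
      show "\<And>x. x \<in> ?E \<Longrightarrow> T1 x = T2 x" using T(3) by (metis restrict_apply')
      show "x \<in> span ?E" using span_ext[OF ss] by simp
    qed
    then show "T1 = T2" by blast
  qed
  ultimately show ?thesis using finite_imageD by blast
qed

lemma id_GLs: "id \<in> GLs \<Omega>"
  by (simp add: GLs_def linear_id)

lemma linear_funpow:
  fixes A :: "'a::real_vector \<Rightarrow> 'a"
  shows "linear A \<Longrightarrow> linear (A ^^ k)"
proof (induction k)
  case 0
  have "A ^^ 0 = id" by (rule ext) simp
  then show ?case using linear_id by metis
next
  case (Suc k)
  have "A ^^ Suc k = A \<circ> A ^^ k" by (rule ext) simp
  then show ?case using Suc linear_compose by metis
qed

lemma psd_pow: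
  assumes sym: "\<And>x z. inner x (A z) = inner (A x) z" and pos: "\<And>x. inner x (A x) \<ge> 0"
  shows "inner x ((A ^^ k) x) \<ge> 0"
proof (induction k arbitrary: x rule: less_induct)
  case (less k)
  consider "k = 0" | "k = 1" | j where "k = Suc (Suc j)" by (metis One_nat_def not0_implies_Suc)
  then show ?case
  proof cases
    case 1 then show ?thesis by simp
  next
    case 2 then show ?thesis using pos by simp
  next
    case 3
    have "(A ^^ k) x = A ((A ^^ j) (A x))" using 3 by (simp add: funpow_swap1)
    then have "inner x ((A ^^ k) x) = inner (A x) ((A ^^ j) (A x))" using sym by simp
    also have "\<dots> \<ge> 0" using less 3 by simp
    finally show ?thesis .
  qed
qed

lemma power_eig:
  fixes A :: "'a::euclidean_space \<Rightarrow> 'a"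
  assumes lin: "linear A" and psd: "\<And>x k. inner x ((A ^^ k) x) \<ge> 0"
    and m: "m > 0" and mu: "\<mu> > 0" and eq: "(A ^^ m) e = \<mu> *\<^sub>R e"
  shows "A e = root m \<mu> *\<^sub>R e"
proof -
  define l where "l = root m \<mu>"
  have lpos: "l > 0" using m mu by (simp add: l_def)
  have lm: "l ^ m = \<mu>" using m mu by (simp add: l_def real_root_pow_pos2)
  define v where "v = A e - l *\<^sub>R e"
  define g where "g k = (l ^ (m - k)) *\<^sub>R (A ^^ k) e" for k
  have lk: "linear (A ^^ k)" for k using linear_funpow[OF lin] .
  have step: "l ^ (m - Suc k) *\<^sub>R (A ^^ k) v = g (Suc k) - g k" if "k < m" for k
  proof -
    have h1: "(A ^^ k) v = A ((A ^^ k) e) - l *\<^sub>R (A ^^ k) e"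
      unfolding v_def using lk[of k] by (simp add: linear_diff linear_scale funpow_swap1)
    have h2: "(A ^^ Suc k) e = A ((A ^^ k) e)" by simp
    have pw: "l ^ (m - k) = l ^ (m - Suc k) * l"
    proof -
      have "m - k = Suc (m - Suc k)" using that by simp
      then show ?thesis by (simp add: mult.commute)
    qed
    show ?thesis unfolding g_def h2 h1 pw by (simp add: scaleR_diff_right)
  qed
  have "(\<Sum>k<m. l ^ (m - Suc k) *\<^sub>R (A ^^ k) v) = (\<Sum>k<m. g (Suc k) - g k)"
    using step by (intro sum.cong) auto
  also have "\<dots> = g m - g 0" by (rule sum_lessThan_telescope)
  also have "\<dots> = 0" unfolding g_def using eq lm by simp
  finally have s0: "(\<Sum>k<m. l ^ (m - Suc k) *\<^sub>R (A ^^ k) v) = 0" .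
  have "(\<Sum>k<m. l ^ (m - Suc k) * inner v ((A ^^ k) v)) = inner v (\<Sum>k<m. l ^ (m - Suc k) *\<^sub>R (A ^^ k) v)"
    by (simp add: inner_sum_right)
  also have "\<dots> = 0" using s0 by simp
  finally have "(\<Sum>k<m. l ^ (m - Suc k) * inner v ((A ^^ k) v)) = 0" .
  moreover have "\<And>k. 0 \<le> l ^ (m - Suc k) * inner v ((A ^^ k) v)" using psd lpos by simp
  ultimately have all: "\<forall>k\<in>{..<m}. l ^ (m - Suc k) * inner v ((A ^^ k) v) = 0"
    using sum_nonneg_eq_0_iff[of "{..<m}" "\<lambda>k. l ^ (m - Suc k) * inner v ((A ^^ k) v)"] by blast
  have "0 \<in> {..<m}" using m by simp
  then have "l ^ (m - Suc 0) * inner v ((A ^^ 0) v) = 0" using all by blast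
  then have "l ^ (m - Suc 0) * inner v v = 0" by simp
  then have "v = 0" using lpos by simp
  then show ?thesis unfolding v_def l_def by simp
qed

lemma eigen_ext:
  assumes ss: "state_space \<Omega>" and fin: "finite (extreme_points \<Omega>)"
    and sd: "pos_cone \<Omega> = {y. \<forall>x\<in>pos_cone \<Omega>. inner x y \<ge> 0}"
    and T: "linear T" "bij T" "T ` pos_cone \<Omega> = pos_cone \<Omega>"
    and e: "e \<in> extreme_points \<Omega>"
  shows "\<exists>l>0. adjoint T (T e) = l *\<^sub>R e"
proof -
  let ?K = "pos_cone \<Omega>"
  let ?E = "extreme_points \<Omega>"
  define A where "A = adjoint T \<circ> T"
  have linA: "linear A" unfolding A_def using T(1) adjoint_linear linear_compose by blast
  have sym0: "inner x (A z) = inner (T x) (T z)" for x z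
    unfolding A_def using adjoint_works[OF T(1)] by simp
  have sym: "inner x (A z) = inner (A x) z" for x z
    using sym0 by (simp add: inner_commute)
  have pos: "inner x (A x) \<ge> 0" for x using sym0 by simp
  have injT: "inj T" using T(2) bij_is_inj by blast
  have injA: "inj A"
  proof (rule injI)
    fix x y assume "A x = A y"
    then have "A (x - y) = 0" using linA by (simp add: linear_diff)
    then have "inner (T (x - y)) (T (x - y)) = 0" using sym0[of "x - y" "x - y"] by simp
    then have "T (x - y) = 0" by simp
    then have "T x = T y" using T(1) by (simp add: linear_diff)
    then show "x = y" using injT by (simp add: inj_eq)
  qed
  have bijA: "bij A" using injA eucl.linear_inj_imp_surj[OF linA injA] by (simp add: bij_def)
  have Kpos: "inner x y \<ge> 0" if "x \<in> ?K" "y \<in> ?K" for x y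
    using that sd by blast
  have hinto: "A ` ?K \<subseteq> ?K"
  proof
    fix z assume "z \<in> A ` ?K"
    then obtain x where x: "x \<in> ?K" "z = A x" by blast
    have "inner y (A x) \<ge> 0" if "y \<in> ?K" for y
    proof -
      have "T y \<in> ?K" "T x \<in> ?K" using T(3) that x(1) by blast+
      then show ?thesis using sym0 Kpos by simp
    qed
    then have "A x \<in> {y. \<forall>x\<in>?K. inner x y \<ge> 0}" by simp
    then show "z \<in> ?K" using x sd by simp
  qed
  have hback: "y \<in> ?K" if hy: "A y \<in> ?K" for y
  proof -
    have "inner z (T y) \<ge> 0" if "z \<in> ?K" for z
    proof -
      obtain z0 where "z0 \<in> ?K" "z = T z0" using T(3) \<open>z \<in> ?K\<close> by blast
      then show ?thesis using sym0[of z0 y] Kpos[of z0 "A y"] hy by simp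
    qed
    then have "T y \<in> ?K" using sd by blast
    then obtain y0 where "y0 \<in> ?K" "T y = T y0" using T(3) by (metis imageE)
    then show ?thesis using injT by (simp add: inj_eq)
  qed
  have iter: "\<exists>c>0. \<exists>e'\<in>?E. (A ^^ k) e = c *\<^sub>R e'" for k
  proof (induction k)
    case 0 then show ?case using e by (auto intro!: exI[of _ 1])
  next
    case (Suc k)
    then obtain c e' where ce: "c > 0" "e' \<in> ?E" "(A ^^ k) e = c *\<^sub>R e'" by blast
    obtain d e'' where de: "d > 0" "e'' \<in> ?E" "A e' = d *\<^sub>R e''"
      using ray[OF ss linA bijA hinto hback ce(2)] by blast
    have "(A ^^ Suc k) e = (c * d) *\<^sub>R e''" using ce de linA by (simp add: linear_scale)
    then show ?case using ce de by (intro exI[of _ "c*d"]) auto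
  qed
  define r where "r k = (SOME e'. e' \<in> ?E \<and> (\<exists>c>0. (A ^^ k) e = c *\<^sub>R e'))" for k
  have r: "r k \<in> ?E \<and> (\<exists>c>0. (A ^^ k) e = c *\<^sub>R r k)" for k
    unfolding r_def by (rule someI_ex) (use iter[of k] in blast)
  have "\<not> inj_on r {0..card ?E}"
  proof
    assume "inj_on r {0..card ?E}"
    then have "card {0..card ?E} \<le> card ?E" using card_inj_on_le[of r "{0..card ?E}" ?E] r fin by blast
    then show False by simp
  qed
  then obtain k1 k2 where kk: "k1 \<noteq> k2" "r k1 = r k2" unfolding inj_on_def by blast
  obtain k l where kl: "k < l" "r k = r l" using kk by (metis linorder_neqE_nat)
  obtain c1 where c1: "c1 > 0" "(A ^^ k) e = c1 *\<^sub>R r k" using r by blast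
  obtain c2 where c2: "c2 > 0" "(A ^^ l) e = c2 *\<^sub>R r k" using r kl by metis
  define m where "m = l - k"
  have m: "m > 0" using kl by (simp add: m_def)
  have "l = k + m" using kl by (simp add: m_def)
  then have "A ^^ l = A ^^ k \<circ> A ^^ m" by (simp add: funpow_add)
  then have "(A ^^ l) e = (A ^^ k) ((A ^^ m) e)" by simp
  moreover have "(A ^^ k) ((c2 / c1) *\<^sub>R e) = c2 *\<^sub>R r k"
    using c1 linear_funpow[OF linA, of k] by (simp add: linear_scale)
  ultimately have "(A ^^ k) ((A ^^ m) e) = (A ^^ k) ((c2 / c1) *\<^sub>R e)" using c2 by simp
  then have eqm: "(A ^^ m) e = (c2 / c1) *\<^sub>R e" using inj_fn[OF injA, of k] by (simp add: inj_eq)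
  have psd: "inner x ((A ^^ j) x) \<ge> 0" for x j using psd_pow[of A] sym pos by blast
  have "A e = root m (c2/c1) *\<^sub>R e"
    using power_eig[OF linA psd m _ eqm] c1 c2 by simp
  moreover have "root m (c2/c1) > 0" using m c1 c2 by simp
  ultimately show ?thesis unfolding A_def by auto
qed

lemma key:
  fixes \<Omega> :: "'a::euclidean_space set"
  assumes ss: "state_space \<Omega>" and fin: "finite (extreme_points \<Omega>)"
    and sd: "pos_cone \<Omega> = {y. \<forall>x\<in>pos_cone \<Omega>. inner x y \<ge> 0}"
  shows "self_dual \<Omega> (gl_inner \<Omega>)"
proof -
  let ?K = "pos_cone \<Omega>"
  let ?E = "extreme_points \<Omega>"
  let ?G = "GLs \<Omega>"
  have finG: "finite ?G" using GLs_finite[OF ss fin] .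
  have neG: "?G \<noteq> {}" using id_GLs by blast
  have cpos: "real (card ?G) > 0" using finG neG by (simp add: card_gt_0_iff)
  have linG: "linear T" "bij T" if "T \<in> ?G" for T using that by (auto simp: GLs_def)
  have TK: "T ` ?K = ?K" if "T \<in> ?G" for T
    using pos_cone_image[of T \<Omega>] that by (auto simp: GLs_def)
  have swap: "inner (T x) (T y) = inner x (adjoint T (T y))" if "T \<in> ?G" for T x y
    using adjoint_works[OF linG(1)[OF that]] by simp
  define w where "w y = (\<Sum>T\<in>?G. adjoint T (T y)) /\<^sub>R real (card ?G)" for y
  have glw: "gl_inner \<Omega> x y = inner x (w y)" for x y
  proof -
    have "(\<Sum>T\<in>?G. inner (T x) (T y)) = (\<Sum>T\<in>?G. inner x (adjoint T (T y)))"
      using swap by (intro sum.cong) auto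
    also have "\<dots> = inner x (\<Sum>T\<in>?G. adjoint T (T y))" by (simp add: inner_sum_right)
    finally show ?thesis unfolding gl_inner_def w_def by (simp add: divide_inverse mult.commute)
  qed
  have gle: "\<exists>\<Lambda>>0. \<forall>y. gl_inner \<Omega> e y = \<Lambda> * inner e y" if e: "e \<in> ?E" for e
  proof -
    have ex: "\<exists>l>0. adjoint T (T e) = l *\<^sub>R e" if "T \<in> ?G" for T
      using eigen_ext[OF ss fin sd linG(1)[OF that] linG(2)[OF that] TK[OF that] e] .
    define lam where "lam (T::'a\<Rightarrow>'a) = (SOME l. l > 0 \<and> adjoint T (T e) = l *\<^sub>R e)" for T
    have lam: "lam T > 0 \<and> adjoint T (T e) = lam T *\<^sub>R e" if "T \<in> ?G" for T
      unfolding lam_def by (rule someI_ex) (use ex[OF that] in blast)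
    have hterm: "inner (T e) (T y) = lam T * inner e y" if "T \<in> ?G" for T y
    proof -
      have "inner (T e) (T y) = inner (T y) (T e)" by (simp add: inner_commute)
      also have "\<dots> = inner y (adjoint T (T e))" using swap[OF that] by simp
      also have "\<dots> = lam T * inner e y" using lam[OF that] by (simp add: inner_commute)
      finally show ?thesis .
    qed
    define \<Lambda> where "\<Lambda> = (\<Sum>T\<in>?G. lam T) / real (card ?G)"
    have "\<Lambda> > 0" unfolding \<Lambda>_def using cpos lam finG neG by (intro divide_pos_pos sum_pos) auto
    moreover have "gl_inner \<Omega> e y = \<Lambda> * inner e y" for y
    proof -
      have "(\<Sum>T\<in>?G. inner (T e) (T y)) = (\<Sum>T\<in>?G. lam T * inner e y)"
        using hterm by (intro sum.cong) auto
      also have "\<dots> = (\<Sum>T\<in>?G. lam T) * inner e y" by (simp add: sum_distrib_right)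
      finally show ?thesis unfolding gl_inner_def \<Lambda>_def by simp
    qed
    ultimately show ?thesis by blast
  qed
  have "y \<in> ?K \<longleftrightarrow> (\<forall>x\<in>?K. 0 \<le> gl_inner \<Omega> x y)" for y
  proof -
    have "(\<forall>x\<in>?K. 0 \<le> gl_inner \<Omega> x y) \<longleftrightarrow> (\<forall>x\<in>?K. 0 \<le> inner x (w y))" using glw by simp
    also have "\<dots> \<longleftrightarrow> (\<forall>e\<in>?E. 0 \<le> inner e (w y))" using red[OF ss fin] by blast
    also have "\<dots> \<longleftrightarrow> (\<forall>e\<in>?E. 0 \<le> gl_inner \<Omega> e y)" using glw by simp
    also have "\<dots> \<longleftrightarrow> (\<forall>e\<in>?E. 0 \<le> inner e y)"
    proof (intro ball_cong refl)
      fix e assume "e \<in> ?E"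
      then obtain \<Lambda> where "\<Lambda> > 0" "\<forall>y. gl_inner \<Omega> e y = \<Lambda> * inner e y" using gle by blast
      then show "(0 \<le> gl_inner \<Omega> e y) = (0 \<le> inner e y)" by (simp add: zero_le_mult_iff)
    qed
    also have "\<dots> \<longleftrightarrow> (\<forall>x\<in>?K. 0 \<le> inner x y)" using red[OF ss fin] by blast
    also have "\<dots> \<longleftrightarrow> y \<in> ?K" using sd by blast
    finally show ?thesis by blast
  qed
  then show ?thesis unfolding self_dual_def internal_dual_cone_def by blast
qed

context
  fixes ip :: "'a::euclidean_space \<Rightarrow> 'a \<Rightarrow> real"
  assumes ip: "is_inner_product ip"
begin

lemma ipl: "linear (\<lambda>x. ip x y)" using ip by (simp add: is_inner_product_def)
lemma ip_sym: "ip x y = ip y x" using ip by (simp add: is_inner_product_def)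
lemma ip_pos: "x \<noteq> 0 \<Longrightarrow> ip x x > 0" using ip by (simp add: is_inner_product_def)
lemma ip_sum: "ip (\<Sum>u\<in>U. f u *\<^sub>R u) y = (\<Sum>u\<in>U. f u * ip u y)"
  using linear_sum[OF ipl[of y], of "\<lambda>u. f u *\<^sub>R u" U] linear_scale[OF ipl[of y]] by simp
lemma ip_diff: "ip (a - b) y = ip a y - ip b y" using linear_diff[OF ipl[of y]] by simp
lemma ip_add: "ip (a + b) y = ip a y + ip b y" using linear_add[OF ipl[of y]] by simp
lemma ip_scale: "ip (c *\<^sub>R a) y = c * ip a y" using linear_scale[OF ipl[of y]] by simp
lemma ip_zero: "ip 0 y = 0" using linear_0[OF ipl[of y]] by simp
lemma ip_self0: "ip x x = 0 \<longleftrightarrow> x = 0" using ip_pos[of x] ip_zero by fastforce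

lemma ortho_exists:
  "n \<le> DIM('a) \<Longrightarrow> \<exists>U. finite U \<and> card U = n \<and> (\<forall>u\<in>U. \<forall>u'\<in>U. ip u u' = (if u = u' then 1 else 0))"
proof (induction n)
  case 0 then show ?case by (intro exI[of _ "{}"]) simp
next
  case (Suc n)
  then obtain U where U: "finite U" "card U = n" "\<forall>u\<in>U. \<forall>u'\<in>U. ip u u' = (if u = u' then 1 else 0)"
    by auto
  have "span U \<noteq> UNIV"
  proof
    assume "span U = UNIV"
    then have "DIM('a) = dim U" using dim_span[of U] dim_UNIV by metis
    also have "\<dots> \<le> n" using dim_le_card'[OF U(1)] U(2) by simp
    finally show False using Suc.prems by simp
  qed
  then obtain v where v: "v \<notin> span U" by blast
  define w where "w = v - (\<Sum>u\<in>U. ip v u *\<^sub>R u)"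
  have "w \<noteq> 0"
  proof
    assume "w = 0"
    then have "v = (\<Sum>u\<in>U. ip v u *\<^sub>R u)" by (simp add: w_def)
    moreover have "(\<Sum>u\<in>U. ip v u *\<^sub>R u) \<in> span U"
      by (intro span_sum span_scale span_base)
    ultimately show False using v by simp
  qed
  then have wpos: "ip w w > 0" by (rule ip_pos)
  have worth: "ip w u0 = 0" if "u0 \<in> U" for u0
  proof -
    have "ip (\<Sum>u\<in>U. ip v u *\<^sub>R u) u0 = (\<Sum>u\<in>U. ip v u * ip u u0)" by (rule ip_sum)
    also have "\<dots> = (\<Sum>u\<in>U. if u = u0 then ip v u else 0)"
      using U(3) that by (intro sum.cong) auto
    also have "\<dots> = ip v u0" using U(1) that by (simp add: sum.delta')
    finally show ?thesis unfolding w_def by (simp add: ip_diff)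
  qed
  define z where "z = w /\<^sub>R sqrt (ip w w)"
  have zz: "ip z z = 1"
  proof -
    have "ip z z = inverse (sqrt (ip w w)) * (inverse (sqrt (ip w w)) * ip w w)"
      unfolding z_def by (simp add: ip_scale ip_sym[of w "_ *\<^sub>R w"])
    also have "\<dots> = ip w w / (sqrt (ip w w) * sqrt (ip w w))"
      using wpos by (simp add: field_simps)
    also have "\<dots> = 1" using wpos by simp
    finally show ?thesis .
  qed
  have zu: "ip z u0 = 0" if "u0 \<in> U" for u0
    unfolding z_def using worth[OF that] by (simp add: ip_scale)
  have uz: "ip u0 z = 0" if "u0 \<in> U" for u0 using zu[OF that] ip_sym by simp
  have znot: "z \<notin> U" using zz zu by force
  show ?case
  proof (intro exI[of _ "insert z U"] conjI)
    show "finite (insert z U)" using U by simp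
    show "card (insert z U) = Suc n" using U znot by simp
    show "\<forall>u\<in>insert z U. \<forall>u'\<in>insert z U. ip u u' = (if u = u' then 1 else 0)"
      using U(3) zz zu uz znot by auto
  qed
qed

lemma ip_factor: "\<exists>\<Xi>::'a\<Rightarrow>'a. linear \<Xi> \<and> bij \<Xi> \<and> (\<forall>x y. ip x y = inner (\<Xi> x) (\<Xi> y))"
proof -
  obtain U where U: "finite U" "card U = DIM('a)" and orth: "\<forall>u\<in>U. \<forall>u'\<in>U. ip u u' = (if u = u' then 1 else 0)"
    using ortho_exists[of "DIM('a)"] by auto
  have ind: "independent U"
  proof
    assume "dependent U"
    then obtain c v where c: "v \<in> U" "c v \<noteq> 0" "(\<Sum>v\<in>U. c v *\<^sub>R v) = 0"
      using dependent_finite[OF U(1)] by blast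
    have "ip (\<Sum>v\<in>U. c v *\<^sub>R v) v = (\<Sum>u\<in>U. c u * ip u v)" by (rule ip_sum)
    also have "\<dots> = (\<Sum>u\<in>U. if u = v then c u else 0)" using orth c(1) by (intro sum.cong) auto
    also have "\<dots> = c v" using U(1) c(1) by (simp add: sum.delta')
    finally show False using c ip_zero by simp
  qed
  have "UNIV \<subseteq> span U"
    using card_ge_dim_independent[of U UNIV] ind U by (simp add: dim_UNIV)
  then have spanU: "span U = UNIV" by auto
  have coef: "ip (\<Sum>u\<in>U. f u *\<^sub>R u) u0 = f u0" if "u0 \<in> U" for f u0
  proof -
    have "ip (\<Sum>u\<in>U. f u *\<^sub>R u) u0 = (\<Sum>u\<in>U. f u * ip u u0)" by (rule ip_sum)
    also have "\<dots> = (\<Sum>u\<in>U. if u = u0 then f u else 0)" using orth that by (intro sum.cong) auto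
    also have "\<dots> = f u0" using U(1) that by (simp add: sum.delta')
    finally show ?thesis .
  qed
  have expand: "x = (\<Sum>u\<in>U. ip x u *\<^sub>R u)" for x
  proof -
    define z where "z = x - (\<Sum>u\<in>U. ip x u *\<^sub>R u)"
    have zu: "ip z u0 = 0" if "u0 \<in> U" for u0
      unfolding z_def using coef[OF that, of "\<lambda>u. ip x u"] by (simp add: ip_diff)
    have "z \<in> span U" using spanU by simp
    then obtain c where c: "z = (\<Sum>u\<in>U. c u *\<^sub>R u)" using span_finite[OF U(1)] by blast
    have "ip z z = ip (\<Sum>u\<in>U. c u *\<^sub>R u) z" using c by simp
    also have "\<dots> = (\<Sum>u\<in>U. c u * ip u z)" by (rule ip_sum)
    also have "\<dots> = 0" using zu ip_sym by (intro sum.neutral) simp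
    finally have "z = 0" using ip_self0 by simp
    then show ?thesis by (simp add: z_def)
  qed
  have ipexp: "ip x y = (\<Sum>u\<in>U. ip x u * ip y u)" for x y
  proof -
    have "ip x y = ip (\<Sum>u\<in>U. ip x u *\<^sub>R u) y" by (rule arg_cong[OF expand[of x], of "\<lambda>t. ip t y"])
    also have "\<dots> = (\<Sum>u\<in>U. ip x u * ip u y)" by (rule ip_sum)
    finally show ?thesis using ip_sym by simp
  qed
  obtain \<beta> :: "'a \<Rightarrow> 'a" where \<beta>: "bij_betw \<beta> U Basis"
    using finite_same_card_bij[OF U(1) finite_Basis[where 'a='a]] U(2) by auto
  have \<beta>B: "\<beta> u \<in> Basis" if "u \<in> U" for u using \<beta> that bij_betwE by blast
  have \<beta>inj: "\<beta> u = \<beta> u' \<longleftrightarrow> u = u'" if "u \<in> U" "u' \<in> U" for u u'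
    using \<beta> that by (metis bij_betw_iff_bijections)
  define \<Xi> where "\<Xi> x = (\<Sum>u\<in>U. ip x u *\<^sub>R \<beta> u)" for x
  have lin: "linear \<Xi>"
    by (rule linearI) (simp_all add: \<Xi>_def ip_add ip_scale scaleR_add_left sum.distrib scaleR_sum_right)
  have inn1: "inner (\<Xi> x) (\<beta> u0) = ip x u0" if "u0 \<in> U" for x u0
  proof -
    have "inner (\<Xi> x) (\<beta> u0) = (\<Sum>u\<in>U. ip x u * inner (\<beta> u) (\<beta> u0))"
      unfolding \<Xi>_def by (simp add: inner_sum_left)
    also have "\<dots> = (\<Sum>u\<in>U. if u = u0 then ip x u else 0)"
      using that \<beta>B \<beta>inj by (intro sum.cong) (auto simp: inner_Basis)
    also have "\<dots> = ip x u0" using U(1) that by (simp add: sum.delta')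
    finally show ?thesis .
  qed
  have inn: "ip x y = inner (\<Xi> x) (\<Xi> y)" for x y
  proof -
    have "inner (\<Xi> x) (\<Xi> y) = (\<Sum>u\<in>U. ip y u * inner (\<Xi> x) (\<beta> u))"
      unfolding \<Xi>_def[of y] by (simp add: inner_sum_right)
    also have "\<dots> = (\<Sum>u\<in>U. ip x u * ip y u)" using inn1 by (intro sum.cong) auto
    finally show ?thesis using ipexp[of x y] by simp
  qed
  have "inj \<Xi>"
  proof (rule injI)
    fix x y assume "\<Xi> x = \<Xi> y"
    then have "\<Xi> (x - y) = 0" using lin by (simp add: linear_diff)
    then have "ip (x - y) (x - y) = 0" using inn by simp
    then show "x = y" using ip_self0 by simp
  qed
  then have "bij \<Xi>" using eucl.linear_inj_imp_surj[OF lin] by (simp add: bij_def)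
  then show ?thesis using lin inn by blast
qed

end

theorem proposition2p13:
  fixes \<Omega> :: "'a::euclidean_space set"
  assumes "state_space \<Omega>"
    and "transitive_ss \<Omega>"
    and "finite (extreme_points \<Omega>)"
    and "\<exists>ip. is_inner_product ip \<and> self_dual \<Omega> ip"
  shows "\<exists>\<Xi>::'a \<Rightarrow> 'a. linear \<Xi> \<and> bij \<Xi> \<and> transitive_ss (\<Xi> ` \<Omega>) \<and> self_dual (\<Xi> ` \<Omega>) (gl_inner (\<Xi> ` \<Omega>))"
proof -
  obtain ip where ip: "is_inner_product ip" "self_dual \<Omega> ip" using assms(4) by blast
  obtain \<Xi> :: "'a \<Rightarrow> 'a" where X: "linear \<Xi>" "bij \<Xi>" "\<forall>x y. ip x y = inner (\<Xi> x) (\<Xi> y)"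
    using ip_factor[OF ip(1)] by blast
  let ?O = "\<Xi> ` \<Omega>"
  let ?K = "pos_cone \<Omega>"
  have injX: "inj \<Xi>" using X(2) bij_is_inj by blast
  have ss': "state_space ?O" using ss_image[OF assms(1) X(1) X(2)] .
  have fin': "finite (extreme_points ?O)" using ext_image[OF X(1) injX, of \<Omega>] assms(3) by simp
  have tr': "transitive_ss ?O" using transitive_image[OF X(1) X(2) assms(2)] .
  have PK: "pos_cone ?O = \<Xi> ` ?K" using pos_cone_image[OF X(1)] .
  have sdK: "?K = {y. \<forall>x\<in>?K. ip x y \<ge> 0}"
    using ip(2) unfolding self_dual_def internal_dual_cone_def .
  have sd': "pos_cone ?O = {y. \<forall>x\<in>pos_cone ?O. inner x y \<ge> 0}"
  proof (intro equalityI subsetI)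
    fix y assume "y \<in> pos_cone ?O"
    then obtain y0 where y0: "y0 \<in> ?K" "y = \<Xi> y0" using PK by blast
    have "inner x y \<ge> 0" if "x \<in> pos_cone ?O" for x
    proof -
      obtain x0 where x0: "x0 \<in> ?K" "x = \<Xi> x0" using PK \<open>x \<in> pos_cone ?O\<close> by blast
      have "ip x0 y0 \<ge> 0" using sdK y0(1) x0(1) by blast
      then show ?thesis using X(3) x0 y0 by simp
    qed
    then show "y \<in> {y. \<forall>x\<in>pos_cone ?O. inner x y \<ge> 0}" by blast
  next
    fix y assume hy: "y \<in> {y. \<forall>x\<in>pos_cone ?O. inner x y \<ge> 0}"
    obtain y0 where y0: "y = \<Xi> y0" using X(2) by (metis bij_pointE)
    have "ip x0 y0 \<ge> 0" if "x0 \<in> ?K" for x0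
    proof -
      have "\<Xi> x0 \<in> pos_cone ?O" using PK that by blast
      then have "inner (\<Xi> x0) y \<ge> 0" using hy by blast
      then show ?thesis using X(3) y0 by simp
    qed
    then have "y0 \<in> ?K" using sdK by blast
    then show "y \<in> pos_cone ?O" using PK y0 by blast
  qed
  have "self_dual ?O (gl_inner ?O)" using key[OF ss' fin' sd'] .
  then show ?thesis using X(1,2) tr' by blast
qed

end
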